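(* For every sequence ${\mathbf s}=(s_1,\dots,s_l)$ in $\widehat{\mathcal S}$ with $l\ge1$ we have ${\mathcal Y}_T({\mathbf s})=\Delta({\mathcal Y}_T({\mathbf s}'))\oplus(c^{\alpha_l})^{-1}\big(\Delta({\mathcal Y}_T({\mathbf s}'))\big)\subset\bigoplus_{\sigma\in I({\mathbf s})}Q_T$.
   Context: $R$ irreducible reduced finite root system (positive roots $R^+$, simple roots $\Pi$, highest root $\gamma$); $\widehat X=X\oplus\mathbb Z$, $\delta=(0,-1)$, affine roots $\widehat R=\{\alpha+n\delta\}$. $\widehat{\mathcal W}$ generated by $s_{\alpha,n}(v,m)=(v-(\langle\alpha,v\rangle-mn)\alpha^\vee,m)$, acting contragrediently on $\widehat X$ (permuting $\widehat R$); $\widehat{\mathcal S}=\{s_{\alpha,0}:\alpha\in\Pi\}\cup\{s_{\gamma,1}\}$ with simple affine roots $\alpha$ resp. $-\gamma+\delta$. $T$: commutative unital domain, $2$ not a zero divisor, affine roots nonzero in $\widehat X\otimes T$; $S_T$ the symmetric algebra of $\widehat X\otimes T$; $Q_T=S_T[2^{-1}][\alpha^{-1}:\alpha\in\widehat R]$. For ${\mathbf s}$: $I({\mathbf s})$ = strictly increasing tuples in $\{1,\dots,l\}$, $\operatorname{ev}(i_1,\dots,i_n)=s_{i_1}\cdots s_{i_n}$; ${\mathbf s}'=(s_1,\dots,s_{l-1})$, $I({\mathbf s})=I({\mathbf s}')\sqcup I({\mathbf s}')s_l$; $\Delta\colon\bigoplus_{I({\mathbf s}')}Q_T\to\bigoplus_{I({\mathbf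 s})}Q_T$, $\Delta(z)_\gamma=\Delta(z)_{\gamma s_l}=z_\gamma$; $c^\lambda$ multiplies the $\sigma$-component by $\operatorname{ev}(\sigma)(\lambda)\otimes 1$, and $c^{\alpha_l}$ ($\alpha_l$ the simple affine root of $s_l$) is invertible on $\bigoplus_{I({\mathbf s})}Q_T$. ${\mathcal Y}_T(\emptyset)=S_T\subset Q_T$, ${\mathcal Y}_T({\mathbf s})=\Delta({\mathcal Y}_T({\mathbf s}'))+(c^{\alpha_l})^{-1}(\Delta({\mathcal Y}_T({\mathbf s}')))$. *)

theory Defs
  imports "HOL-Library.Function_Algebras" "HOL-Library.Poly_Mapping" "HOL-Computational_Algebra.Fraction_Field"
begin

section \<open>Lattices: X = Z^r (coordinates 0..r-1), X^vee = Z^r with standard pairing\<close>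

type_synonym lat = "nat \<Rightarrow> int"
type_synonym alat = "lat \<times> int"   (* hat X = X (+) Z ; the element (v,k) *)

definition in_lat :: "nat \<Rightarrow> lat \<Rightarrow> bool" where
  "in_lat r x \<longleftrightarrow> (\<forall>i\<ge>r. x i = 0)"

definition pair :: "nat \<Rightarrow> lat \<Rightarrow> lat \<Rightarrow> int" where
  "pair r x y = (\<Sum>i<r. x i * y i)"

definition lsmult :: "int \<Rightarrow> lat \<Rightarrow> lat" where
  "lsmult c x = (\<lambda>i. c * x i)"

text \<open>Root datum (X, R, X^vee, R^vee) with coroot bijection cor.\<close>
definition root_datum :: "nat \<Rightarrow> lat set \<Rightarrow> (lat \<Rightarrow> lat) \<Rightarrow> bool" where
  "root_datum r R cor \<longleftrightarrow>
     finite R \<and> (\<forall>a\<in>R. in_lat r a \<and> in_lat r (cor a)) \<and> 0 \<notin> R \<and> inj_on cor R \<and>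
     (\<forall>a\<in>R. pair r a (cor a) = 2) \<and>
     (\<forall>a\<in>R. \<forall>b\<in>R. b - lsmult (pair r b (cor a)) a \<in> R) \<and>
     (\<forall>a\<in>R. \<forall>b\<in>R. cor b - lsmult (pair r a (cor b)) (cor a) \<in> cor ` R)"

definition reduced_rs :: "lat set \<Rightarrow> bool" where
  "reduced_rs R \<longleftrightarrow> (\<forall>a\<in>R. \<forall>b\<in>R. (\<exists>m n::int. n \<noteq> 0 \<and> lsmult n b = lsmult m a) \<longrightarrow> b = a \<or> b = - a)"

definition irreducible_rs :: "nat \<Rightarrow> lat set \<Rightarrow> (lat \<Rightarrow> lat) \<Rightarrow> bool" where
  "irreducible_rs r R cor \<longleftrightarrow> R \<noteq> {} \<and>
     \<not> (\<exists>A B. A \<noteq> {} \<and> B \<noteq> {} \<and> A \<union> B = R \<and> A \<inter> B = {} \<and>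
            (\<forall>a\<in>A. \<forall>b\<in>B. pair r b (cor a) = 0))"

definition int_comb :: "lat set \<Rightarrow> (lat \<Rightarrow> int) \<Rightarrow> lat" where
  "int_comb P c = (\<lambda>i. \<Sum>a\<in>P. c a * a i)"

definition nonneg_comb :: "lat set \<Rightarrow> lat \<Rightarrow> bool" where
  "nonneg_comb P v \<longleftrightarrow> (\<exists>c. (\<forall>a\<in>P. c a \<ge> 0) \<and> v = int_comb P c)"

definition is_base :: "lat set \<Rightarrow> lat set \<Rightarrow> bool" where
  "is_base R P \<longleftrightarrow> P \<subseteq> R \<and>
     (\<forall>c. int_comb P c = 0 \<longrightarrow> (\<forall>a\<in>P. c a = 0)) \<and>
     (\<forall>b\<in>R. nonneg_comb P b \<or> nonneg_comb P (- b))"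

definition pos_roots :: "lat set \<Rightarrow> lat set \<Rightarrow> lat set" where
  "pos_roots R P = {b\<in>R. nonneg_comb P b}"

definition highest_root :: "lat set \<Rightarrow> lat set \<Rightarrow> lat \<Rightarrow> bool" where
  "highest_root R P g \<longleftrightarrow> g \<in> R \<and> (\<forall>b\<in>R. nonneg_comb P (g - b))"

text \<open>alpha + n delta with delta = (0,-1) is the element (alpha, -n).\<close>
definition aff_roots :: "lat set \<Rightarrow> alat set" where
  "aff_roots R = {(a, - n) | a n. a \<in> R}"

text \<open>Contragredient action of s_{alpha,n}: it sends alpha - n delta = (alpha, n) to its negative.\<close>
definition srefl :: "nat \<Rightarrow> (lat \<Rightarrow> lat) \<Rightarrow> lat \<Rightarrow> int \<Rightarrow> alat \<Rightarrow> alat" where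
  "srefl r cor a n x = (fst x - lsmult (pair r (fst x) (cor a)) a, snd x - n * pair r (fst x) (cor a))"

text \<open>Elements of hat S are labelled: Some alpha (alpha in Pi) is s_{alpha,0}, None is s_{gamma,1}.\<close>
definition sref :: "nat \<Rightarrow> (lat \<Rightarrow> lat) \<Rightarrow> lat \<Rightarrow> lat option \<Rightarrow> alat \<Rightarrow> alat" where
  "sref r cor g t = (case t of Some a \<Rightarrow> srefl r cor a 0 | None \<Rightarrow> srefl r cor g 1)"

text \<open>simple affine root of a generator: alpha resp. -gamma + delta = (-gamma, -1)\<close>
definition sroot :: "lat \<Rightarrow> lat option \<Rightarrow> alat" where
  "sroot g t = (case t of Some a \<Rightarrow> (a, 0) | None \<Rightarrow> (- g, -1))"

definition Sgens :: "lat set \<Rightarrow> lat option set" where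
  "Sgens P = Some ` P \<union> {None}"

text \<open>I(s): strictly increasing tuples in {1..l}; ev(i1..in) = s_{i1} o ... o s_{in}\<close>
definition idx :: "nat \<Rightarrow> nat list set" where
  "idx l = {\<sigma>. sorted_wrt (<) \<sigma> \<and> set \<sigma> \<subseteq> {1..l}}"

definition ev :: "nat \<Rightarrow> (lat \<Rightarrow> lat) \<Rightarrow> lat \<Rightarrow> lat option list \<Rightarrow> nat list \<Rightarrow> alat \<Rightarrow> alat" where
  "ev r cor g s \<sigma> = foldr (\<lambda>i f. sref r cor g (s ! (i - 1)) \<circ> f) \<sigma> id"

section \<open>S_T = Sym(hat X (x) T) = T[x_0..x_r] and Q_T\<close>

type_synonym 't ST = "(nat \<Rightarrow>\<^sub>0 nat) \<Rightarrow>\<^sub>0 't"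

text \<open>hat X (x) T = T^(r+1): coordinates 0..r-1 from X, coordinate r from Z.\<close>
definition tens :: "nat \<Rightarrow> alat \<Rightarrow> nat \<Rightarrow> 't::idom" where
  "tens r x i = (if i < r then of_int (fst x i) else if i = r then of_int (snd x) else 0)"

definition lin :: "nat \<Rightarrow> (nat \<Rightarrow> 't::idom) \<Rightarrow> 't ST" where
  "lin r v = (\<Sum>i\<le>r. Poly_Mapping.single (Poly_Mapping.single i (1::nat)) (v i))"

definition linx :: "nat \<Rightarrow> alat \<Rightarrow> 't::idom ST" where
  "linx r x = lin r (tens r x)"

inductive_set denoms :: "nat \<Rightarrow> lat set \<Rightarrow> 't::idom ST set" for r R where
  one: "1 \<in> denoms r R"
| two: "q \<in> denoms r R \<Longrightarrow> 2 * q \<in> denoms r R"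
| root: "q \<in> denoms r R \<Longrightarrow> a \<in> aff_roots R \<Longrightarrow> linx r a * q \<in> denoms r R"

definition QT :: "nat \<Rightarrow> lat set \<Rightarrow> 't::idom ST fract set" where
  "QT r R = {Fract p q | p q. q \<in> denoms r R}"

definition STf :: "'t::idom ST fract set" where
  "STf = range (\<lambda>p. Fract p 1)"

text \<open>Direct sum over I(s): functions on index tuples, zero outside I(s).\<close>
definition dsum :: "nat \<Rightarrow> lat set \<Rightarrow> nat \<Rightarrow> (nat list \<Rightarrow> 't::idom ST fract) set" where
  "dsum r R l = {f. (\<forall>\<sigma>\<in>idx l. f \<sigma> \<in> QT r R) \<and> (\<forall>\<sigma>. \<sigma> \<notin> idx l \<longrightarrow> f \<sigma> = 0)}"

text \<open>Delta : (+)_{I(s')} -> (+)_{I(s)}, with l = length s.\<close>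
definition Delta :: "nat \<Rightarrow> (nat list \<Rightarrow> 'a::zero) \<Rightarrow> nat list \<Rightarrow> 'a" where
  "Delta l z \<sigma> = (if \<sigma> \<in> idx (l - 1) then z \<sigma>
      else if \<sigma> \<noteq> [] \<and> last \<sigma> = l \<and> butlast \<sigma> \<in> idx (l - 1) then z (butlast \<sigma>) else 0)"

definition cmul :: "nat \<Rightarrow> (lat \<Rightarrow> lat) \<Rightarrow> lat \<Rightarrow> lat option list \<Rightarrow> alat
     \<Rightarrow> (nat list \<Rightarrow> 't::idom ST fract) \<Rightarrow> nat list \<Rightarrow> 't ST fract" where
  "cmul r cor g s x f \<sigma> = Fract (linx r (ev r cor g s \<sigma> x)) 1 * f \<sigma>"

definition cinv :: "nat \<Rightarrow> (lat \<Rightarrow> lat) \<Rightarrow> lat \<Rightarrow> lat option list \<Rightarrow> alat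
     \<Rightarrow> (nat list \<Rightarrow> 't::idom ST fract) \<Rightarrow> nat list \<Rightarrow> 't ST fract" where
  "cinv r cor g s x f \<sigma> = f \<sigma> / Fract (linx r (ev r cor g s \<sigma> x)) 1"

definition setplus :: "('a::plus) set \<Rightarrow> 'a set \<Rightarrow> 'a set" where
  "setplus A B = {a + b | a b. a \<in> A \<and> b \<in> B}"

fun Yrev :: "nat \<Rightarrow> (lat \<Rightarrow> lat) \<Rightarrow> lat \<Rightarrow> lat option list \<Rightarrow> (nat list \<Rightarrow> 't::idom ST fract) set" where
  "Yrev r cor g [] = {f. f [] \<in> STf \<and> (\<forall>\<sigma>. \<sigma> \<noteq> [] \<longrightarrow> f \<sigma> = 0)}"
| "Yrev r cor g (t # rs) =
     (let s = rev (t # rs); A = Delta (length s) ` Yrev r cor g rs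
      in setplus A (cinv r cor g s (sroot g t) ` A))"

definition YT :: "nat \<Rightarrow> (lat \<Rightarrow> lat) \<Rightarrow> lat \<Rightarrow> lat option list \<Rightarrow> (nat list \<Rightarrow> 't::idom ST fract) set" where
  "YT r cor g s = Yrev r cor g (rev s)"

end

theory Submission
  imports Defs
begin

definition negp :: "alat \<Rightarrow> alat" where "negp x = (- fst x, - snd x)"

lemma pair_neg: "pair r (- v) w = - pair r v w"
  by (simp add: pair_def sum_negf)

lemma srefl_neg: "srefl r cor a n (negp x) = negp (srefl r cor a n x)"
  by (auto simp: srefl_def negp_def pair_neg lsmult_def algebra_simps)

lemma sref_neg: "sref r cor g t (negp x) = negp (sref r cor g t x)"
  by (cases t) (auto simp: sref_def srefl_neg)

lemma ev_Cons: "ev r cor g s (i # \<sigma>) x = sref r cor g (s ! (i - 1)) (ev r cor g s \<sigma> x)"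
  by (simp add: ev_def)

lemma ev_Nil: "ev r cor g s [] x = x"
  by (simp add: ev_def)

lemma ev_snoc: "ev r cor g s (\<sigma> @ [i]) x = ev r cor g s \<sigma> (sref r cor g (s ! (i - 1)) x)"
  by (induction \<sigma>) (simp_all add: ev_Cons ev_Nil)

lemma ev_neg: "ev r cor g s \<sigma> (negp x) = negp (ev r cor g s \<sigma> x)"
  by (induction \<sigma>) (simp_all add: ev_Cons ev_Nil sref_neg)

lemma linx_neg: "(linx r (negp x) :: 't::idom ST) = - linx r x"
proof -
  have "tens r (negp x) = (\<lambda>i. - (tens r x i :: 't))"
    by (auto simp: tens_def negp_def)
  then show ?thesis
    by (simp add: linx_def lin_def single_uminus sum_negf)
qed


lemma neg_root: assumes "root_datum r R cor" "a \<in> R" shows "- a \<in> R"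
proof -
  have "a - lsmult (pair r a (cor a)) a \<in> R" using assms unfolding root_datum_def by blast
  moreover have "pair r a (cor a) = 2" using assms unfolding root_datum_def by blast
  moreover have "a - lsmult 2 a = - a" by (simp add: lsmult_def fun_eq_iff algebra_simps)
  ultimately show ?thesis by simp
qed

lemma srefl_R: assumes "root_datum r R cor" "a \<in> R" "fst x \<in> R" shows "fst (srefl r cor a n x) \<in> R"
  using assms unfolding root_datum_def srefl_def by auto

lemma sgens_R: assumes "is_base R P" "highest_root R P g" "t \<in> Sgens P"
  shows "t = None \<or> (\<exists>a. t = Some a \<and> a \<in> R)" "g \<in> R"
  using assms unfolding is_base_def highest_root_def Sgens_def by auto

lemma sref_R: assumes "root_datum r R cor" "is_base R P" "highest_root R P g" "t \<in> Sgens P" "fst x \<in> R"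
  shows "fst (sref r cor g t x) \<in> R"
  using sgens_R[OF assms(2,3,4)] assms by (auto simp: sref_def srefl_R)

lemma sroot_R: assumes "root_datum r R cor" "is_base R P" "highest_root R P g" "t \<in> Sgens P"
  shows "fst (sroot g t) \<in> R"
  using sgens_R[OF assms(2,3,4)] assms by (auto simp: sroot_def neg_root)

lemma ev_R: assumes "root_datum r R cor" "is_base R P" "highest_root R P g"
  "\<forall>i\<in>set \<sigma>. s ! (i - 1) \<in> Sgens P" "fst x \<in> R"
  shows "fst (ev r cor g s \<sigma> x) \<in> R"
  using assms(4) by (induction \<sigma>) (auto simp: ev_Cons ev_Nil assms intro!: sref_R[OF assms(1,2,3)])

lemma aff_rootsI: "fst x \<in> R \<Longrightarrow> x \<in> aff_roots R"
  unfolding aff_roots_def by (cases x) (auto intro!: exI[of _ "- snd x"])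

lemma sref_sroot: assumes "root_datum r R cor" "is_base R P" "highest_root R P g" "t \<in> Sgens P"
  shows "sref r cor g t (sroot g t) = negp (sroot g t)"
proof -
  have pc: "\<And>a. a \<in> R \<Longrightarrow> pair r a (cor a) = 2" using assms(1) unfolding root_datum_def by blast
  have pn: "\<And>a. a \<in> R \<Longrightarrow> pair r (- a) (cor a) = -2" using pc pair_neg by (metis)
  show ?thesis using sgens_R[OF assms(2,3,4)]
    by (auto simp: sref_def sroot_def srefl_def negp_def pc pn lsmult_def fun_eq_iff)
qed

lemma denoms_mult: "p \<in> denoms r R \<Longrightarrow> q \<in> denoms r R \<Longrightarrow> p * q \<in> denoms r R"
  by (induction p rule: denoms.induct) (auto simp: mult.assoc intro: denoms.intros)

lemma QT_0: "0 \<in> QT r R"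
  proof -
  have "(0::'a::idom ST fract) = Fract 0 1" by (simp add: Zero_fract_def)
  then show ?thesis unfolding QT_def using denoms.one by blast
qed

lemma STf_QT: "STf \<subseteq> QT r R"
  unfolding QT_def STf_def by (auto intro: denoms.one)

lemma QT_add: assumes "x \<in> QT r R" "y \<in> QT r R" shows "x + y \<in> QT r R"
proof -
  obtain p q where x: "x = Fract p q" "q \<in> denoms r R" using assms(1) unfolding QT_def by auto
  obtain p' q' where y: "y = Fract p' q'" "q' \<in> denoms r R" using assms(2) unfolding QT_def by auto
  show ?thesis
  proof (cases "q = 0 \<or> q' = 0")
    case True then show ?thesis using x y assms by (auto simp: fract_collapse)
  next
    case False
    then have "x + y = Fract (p * q' + p' * q) (q * q')" using x y by simp
    then show ?thesis using denoms_mult[OF x(2) y(2)] unfolding QT_def by blast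
  qed
qed

lemma QT_div: assumes "x \<in> QT r R" "a \<in> aff_roots R" shows "x / Fract (linx r a) 1 \<in> QT r R"
proof -
  obtain p q where x: "x = Fract p q" "q \<in> denoms r R" using assms(1) unfolding QT_def by auto
  have "x / Fract (linx r a) 1 = Fract p (linx r a * q)"
    using x by (simp add: mult.commute)
  moreover have "linx r a * q \<in> denoms r R" using x assms by (auto intro: denoms.root)
  ultimately show ?thesis unfolding QT_def by blast
qed


lemma Delta_zero: "Delta l (\<lambda>_. 0) = (\<lambda>_. 0)"
  by (simp add: Delta_def fun_eq_iff)

lemma cinv_zero: "cinv r cor g s x (\<lambda>_. 0) = (\<lambda>_. 0)"
  by (simp add: cinv_def fun_eq_iff)

lemma zero_Yrev: "((\<lambda>_. 0) :: nat list \<Rightarrow> 't::idom ST fract) \<in> Yrev r cor g rs"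
proof (induction rs)
  case Nil
  have "(0::'t ST fract) \<in> STf" unfolding STf_def by (auto simp: Zero_fract_def)
  then show ?case by (simp only: Yrev.simps mem_Collect_eq) blast
next
  case (Cons t rs)
  let ?A = "Delta (length (rev (t # rs))) ` (Yrev r cor g rs :: (nat list \<Rightarrow> 't ST fract) set)"
  have "Delta (length (rev (t # rs))) (\<lambda>_. 0) \<in> ?A" using Cons by (rule imageI)
  then have z: "(\<lambda>_. 0) \<in> ?A" by (simp only: Delta_zero)
  have "cinv r cor g (rev (t # rs)) (sroot g t) (\<lambda>_. 0) \<in> cinv r cor g (rev (t # rs)) (sroot g t) ` ?A"
    using z by (rule imageI)
  then have z2: "(\<lambda>_. 0) \<in> cinv r cor g (rev (t # rs)) (sroot g t) ` ?A" by (simp only: cinv_zero)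
  have "(\<lambda>_. 0) + (\<lambda>_. 0) \<in> setplus ?A (cinv r cor g (rev (t # rs)) (sroot g t) ` ?A)"
    unfolding setplus_def using z z2 by blast
  moreover have "(\<lambda>_. 0) + (\<lambda>_. 0) = ((\<lambda>_. 0) :: nat list \<Rightarrow> 't ST fract)" by (simp add: fun_eq_iff)
  ultimately show ?case by (simp only: Yrev.simps Let_def)
qed

lemma idx_mono: "l \<le> l' \<Longrightarrow> idx l \<subseteq> idx l'"
  unfolding idx_def by auto

lemma snoc_idx: assumes "\<tau> \<in> idx (l - 1)" "l \<ge> 1" shows "\<tau> @ [l] \<in> idx l" "\<tau> @ [l] \<notin> idx (l - 1)"
proof -
  have a: "sorted_wrt (<) \<tau>" "\<And>x. x \<in> set \<tau> \<Longrightarrow> 1 \<le> x \<and> x \<le> l - 1"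
    using assms(1) unfolding idx_def by auto
  show "\<tau> @ [l] \<in> idx l" unfolding idx_def using a assms(2)
    by (auto simp: sorted_wrt_append dest!: a(2))
  show "\<tau> @ [l] \<notin> idx (l - 1)" unfolding idx_def using assms(2) by auto
qed

lemma Delta_out: assumes "\<sigma> \<notin> idx l" "l \<ge> 1" shows "Delta l z \<sigma> = 0"
proof -
  have "\<sigma> \<notin> idx (l - 1)" using assms idx_mono[of "l - 1" l] by auto
  moreover have "\<not> (\<sigma> \<noteq> [] \<and> last \<sigma> = l \<and> butlast \<sigma> \<in> idx (l - 1))"
  proof
    assume h: "\<sigma> \<noteq> [] \<and> last \<sigma> = l \<and> butlast \<sigma> \<in> idx (l - 1)"
    then have "\<sigma> = butlast \<sigma> @ [l]" by (metis append_butlast_last_id)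
    then show False using snoc_idx(1)[of "butlast \<sigma>" l] h assms by metis
  qed
  ultimately show ?thesis unfolding Delta_def by meson
qed


lemma ST_double_zero: assumes "(2::'t::idom) \<noteq> 0" "(a::'t ST) + a = 0" shows "a = 0"
proof (rule poly_mapping_eqI)
  fix m
  have "Poly_Mapping.lookup (a + a) m = Poly_Mapping.lookup a m + Poly_Mapping.lookup a m" by (rule Poly_Mapping.lookup_add)
  then have "Poly_Mapping.lookup a m + Poly_Mapping.lookup a m = 0" using assms(2) by simp
  then have "2 * Poly_Mapping.lookup a m = 0" by (simp only: mult_2)
  then have "Poly_Mapping.lookup a m = 0" using assms(1) by (simp only: mult_eq_0_iff) blast
  then show "Poly_Mapping.lookup a m = Poly_Mapping.lookup 0 m" by simp
qed

lemma fract_self_neg: assumes "(2::'t::idom) \<noteq> 0" "(x::'t ST fract) = - x" shows "x = 0"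
proof (cases x)
  case (Fract a b)
  then have "Fract a b = Fract (- a) b" using assms(2) by (metis minus_fract)
  then have "a * b = - a * b" using Fract by (simp add: eq_fract)
  then have "(a + a) * b = 0" by (metis add_eq_0_iff distrib_right mult_minus_left)
  then have "a + a = 0" using Fract by simp
  then have "a = 0" using ST_double_zero assms(1) by blast
  then show ?thesis using Fract by (simp add: fract_collapse)
qed


lemma Delta_QT: assumes "\<forall>\<sigma>. (z :: nat list \<Rightarrow> 't::idom ST fract) \<sigma> \<in> QT r R" shows "Delta l z \<sigma> \<in> QT r R"
  using assms by (auto simp: Delta_def intro: QT_0)

lemma Yrev_QT:
  assumes rd: "root_datum r R cor" and ib: "is_base R P" and hr: "highest_root R P g"
  shows "set rs \<subseteq> Sgens P \<Longrightarrow> f \<in> (Yrev r cor g rs :: (nat list \<Rightarrow> 't::idom ST fract) set) \<Longrightarrow>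
    (\<forall>\<sigma>. f \<sigma> \<in> QT r R) \<and> (\<forall>\<sigma>. \<sigma> \<notin> idx (length rs) \<longrightarrow> f \<sigma> = 0)"
proof (induction rs arbitrary: f)
  case Nil
  have e: "[] \<in> idx 0" unfolding idx_def by simp
  have "f [] \<in> STf" "\<forall>\<sigma>. \<sigma> \<noteq> [] \<longrightarrow> f \<sigma> = 0" using Nil by auto
  then show ?case using e STf_QT QT_0 by (metis length_0_conv list.size(3) subsetD)
next
  case (Cons t rs)
  define s where "s = rev (t # rs)"
  define l where "l = length s"
  have l1: "l \<ge> 1" and ll: "l = Suc (length rs)" unfolding l_def s_def by auto
  define A where "A = Delta l ` (Yrev r cor g rs :: (nat list \<Rightarrow> 't ST fract) set)"
  have "f \<in> setplus A (cinv r cor g s (sroot g t) ` A)"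
    using Cons.prems(2) by (simp add: Let_def A_def l_def s_def)
  then obtain z z' where z: "z \<in> Yrev r cor g rs" "z' \<in> Yrev r cor g rs"
     and f: "f = Delta l z + cinv r cor g s (sroot g t) (Delta l z')"
    unfolding setplus_def A_def by blast
  have srs: "set rs \<subseteq> Sgens P" "t \<in> Sgens P" using Cons.prems(1) by auto
  have IHz: "\<forall>\<sigma>. z \<sigma> \<in> QT r R" using Cons.IH[OF srs(1) z(1)] by blast
  have IHz': "\<forall>\<sigma>. z' \<sigma> \<in> QT r R" using Cons.IH[OF srs(1) z(2)] by blast
  have sS: "set s \<subseteq> Sgens P" using Cons.prems(1) unfolding s_def by simp
  have cq: "cinv r cor g s (sroot g t) (Delta l z') \<sigma> \<in> QT r R" for \<sigma>
  proof (cases "\<sigma> \<in> idx l")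
    case True
    have "\<forall>i\<in>set \<sigma>. s ! (i - 1) \<in> Sgens P"
    proof
      fix i assume "i \<in> set \<sigma>"
      then have "1 \<le> i" "i \<le> l" using True unfolding idx_def by auto
      then have "i - 1 < length s" unfolding l_def by auto
      then show "s ! (i - 1) \<in> Sgens P" using sS nth_mem by blast
    qed
    then have "ev r cor g s \<sigma> (sroot g t) \<in> aff_roots R"
      by (intro aff_rootsI ev_R[OF rd ib hr] sroot_R[OF rd ib hr srs(2)])
    then show ?thesis unfolding cinv_def by (intro QT_div Delta_QT IHz')
  next
    case False
    have "Delta l z' \<sigma> = 0" by (rule Delta_out[OF False l1])
    then show ?thesis unfolding cinv_def by (simp add: QT_0)
  qed
  have "f \<sigma> \<in> QT r R" for \<sigma>
    unfolding f plus_fun_def by (intro QT_add Delta_QT IHz cq)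
  moreover have "f \<sigma> = 0" if "\<sigma> \<notin> idx (length (t # rs))" for \<sigma>
  proof -
    have "\<sigma> \<notin> idx l" using that ll by simp
    then show ?thesis unfolding f by (simp add: Delta_out[OF _ l1] cinv_def)
  qed
  ultimately show ?case by blast
qed

lemma inter_zero:
  assumes rd: "root_datum r R cor" and ib: "is_base R P" and hr: "highest_root R P g"
    and two: "(2::'t::idom) \<noteq> 0" and ls: "length s = l" "l \<ge> 1" and t: "s ! (l - 1) \<in> Sgens P"
    and eq: "Delta l (z :: nat list \<Rightarrow> 't ST fract) = cinv r cor g s (sroot g (s ! (l - 1))) (Delta l z')"
  shows "Delta l z = (\<lambda>_. 0)"
proof -
  define \<alpha> where "\<alpha> = sroot g (s ! (l - 1))"
  have key: "z \<tau> = 0" if tau: "\<tau> \<in> idx (l - 1)" for \<tau>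
  proof -
    define F where "F = Fract (linx r (ev r cor g s \<tau> \<alpha>)) (1 :: 't ST)"
    have sn: "\<tau> @ [l] \<notin> idx (l - 1)" using snoc_idx(2)[OF tau ls(2)] .
    have e1: "Delta l z \<tau> = z \<tau>" using tau by (simp add: Delta_def)
    have e2: "Delta l z (\<tau> @ [l]) = z \<tau>" using tau sn by (simp add: Delta_def)
    have e3: "Delta l z' (\<tau> @ [l]) = z' \<tau>" using tau sn by (simp add: Delta_def)
    have e4: "Delta l z' \<tau> = z' \<tau>" using tau by (simp add: Delta_def)
    have evs: "ev r cor g s (\<tau> @ [l]) \<alpha> = negp (ev r cor g s \<tau> \<alpha>)"
      unfolding ev_snoc \<alpha>_def sref_sroot[OF rd ib hr t] ev_neg ..
    have a1: "z \<tau> = z' \<tau> / F"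
      using fun_cong[OF eq, of \<tau>] e1 e4 by (simp add: cinv_def F_def \<alpha>_def)
    have c: "cinv r cor g s \<alpha> (Delta l z') (\<tau> @ [l]) = z' \<tau> / Fract (linx r (negp (ev r cor g s \<tau> \<alpha>))) 1"
      unfolding cinv_def e3 evs ..
    have "Fract (linx r (negp (ev r cor g s \<tau> \<alpha>))) (1::'t ST) = - F"
      unfolding linx_neg F_def by simp
    then have a2: "z \<tau> = z' \<tau> / (- F)"
      using fun_cong[OF eq, of "\<tau> @ [l]"] e2 c unfolding \<alpha>_def[symmetric] by simp
    have "z \<tau> = - z \<tau>" using a1 a2 by simp
    then show ?thesis using fract_self_neg[OF two] by blast
  qed
  show ?thesis
  proof
    fix \<sigma>
    show "Delta l z \<sigma> = 0"
      unfolding Delta_def using key by auto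
  qed
qed

theorem lemma6p7:
  fixes r :: nat and R P :: "lat set" and cor :: "lat \<Rightarrow> lat" and g :: lat
    and s :: "lat option list"
  assumes "root_datum r R cor" and "reduced_rs R" and "irreducible_rs r R cor"
    and "is_base R P" and "highest_root R P g"
    and "(2::'t::idom) \<noteq> 0"
    and "\<forall>a\<in>aff_roots R. (tens r a :: nat \<Rightarrow> 't) \<noteq> (\<lambda>_. 0)"
    and "set s \<subseteq> Sgens P" and "length s \<ge> 1"
  shows "(YT r cor g s :: (nat list \<Rightarrow> 't ST fract) set)
           = setplus (Delta (length s) ` YT r cor g (butlast s))
                     (cinv r cor g s (sroot g (last s)) ` Delta (length s) ` YT r cor g (butlast s))
         \<and> Delta (length s) ` YT r cor g (butlast s)
             \<inter> cinv r cor g s (sroot g (last s)) ` Delta (length s) ` YT r cor g (butlast s)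
           = {(\<lambda>_. 0) :: nat list \<Rightarrow> 't ST fract}
         \<and> YT r cor g s \<subseteq> (dsum r R (length s) :: (nat list \<Rightarrow> 't ST fract) set)"
proof (intro conjI)
  note rd = assms(1) and ib = assms(4) and hr = assms(5)
  have ne: "s \<noteq> []" using assms(9) by auto
  have sb: "s = butlast s @ [last s]" using ne by simp
  have rs: "rev s = last s # rev (butlast s)" by (subst sb) (simp only: rev_append rev.simps append.simps)
  have rr: "rev (last s # rev (butlast s)) = s" by (simp only: rev.simps rev_rev_ident sb[symmetric])
  show "(YT r cor g s :: (nat list \<Rightarrow> 't ST fract) set)
           = setplus (Delta (length s) ` YT r cor g (butlast s))
                     (cinv r cor g s (sroot g (last s)) ` Delta (length s) ` YT r cor g (butlast s))"
    unfolding YT_def rs Yrev.simps Let_def rr ..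
  have lst: "last s = s ! (length s - 1)" using ne by (rule last_conv_nth)
  have "last s \<in> Sgens P" using assms(8) last_in_set[OF ne] by blast
  then have lastS: "s ! (length s - 1) \<in> Sgens P" unfolding lst .
  show "Delta (length s) ` YT r cor g (butlast s)
             \<inter> cinv r cor g s (sroot g (last s)) ` Delta (length s) ` YT r cor g (butlast s)
           = {(\<lambda>_. 0) :: nat list \<Rightarrow> 't ST fract}"
  proof
    show "{(\<lambda>_. 0) :: nat list \<Rightarrow> 't ST fract} \<subseteq> Delta (length s) ` YT r cor g (butlast s)
             \<inter> cinv r cor g s (sroot g (last s)) ` Delta (length s) ` YT r cor g (butlast s)"
    proof -
      have y: "((\<lambda>_. 0) :: nat list \<Rightarrow> 't ST fract) \<in> YT r cor g (butlast s)"
        unfolding YT_def by (rule zero_Yrev)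
      have z: "Delta (length s) ((\<lambda>_. 0) :: nat list \<Rightarrow> 't ST fract) \<in> Delta (length s) ` YT r cor g (butlast s)"
        by (rule imageI[OF y])
      have c: "cinv r cor g s (sroot g (last s)) (Delta (length s) ((\<lambda>_. 0) :: nat list \<Rightarrow> 't ST fract)) \<in> cinv r cor g s (sroot g (last s)) ` Delta (length s) ` YT r cor g (butlast s)"
        by (rule imageI[OF z])
      have "((\<lambda>_. 0) :: nat list \<Rightarrow> 't ST fract) \<in> Delta (length s) ` YT r cor g (butlast s)
             \<inter> cinv r cor g s (sroot g (last s)) ` Delta (length s) ` YT r cor g (butlast s)"
        using IntI[OF z[unfolded Delta_zero] c[unfolded Delta_zero cinv_zero]] .
      then show ?thesis by (simp only: insert_subset empty_subsetI simp_thms)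
    qed
    show "Delta (length s) ` YT r cor g (butlast s)
             \<inter> cinv r cor g s (sroot g (last s)) ` Delta (length s) ` YT r cor g (butlast s)
          \<subseteq> {(\<lambda>_. 0) :: nat list \<Rightarrow> 't ST fract}"
    proof
      fix f :: "nat list \<Rightarrow> 't ST fract"
      assume "f \<in> Delta (length s) ` YT r cor g (butlast s)
             \<inter> cinv r cor g s (sroot g (last s)) ` Delta (length s) ` YT r cor g (butlast s)"
      then have f1: "f \<in> Delta (length s) ` YT r cor g (butlast s)"
        and f2: "f \<in> cinv r cor g s (sroot g (last s)) ` Delta (length s) ` YT r cor g (butlast s)"
        by (rule IntD1, rule IntD2)
      from f1 obtain z where f: "f = Delta (length s) z" by (rule imageE)
      from f2 obtain w where w: "f = cinv r cor g s (sroot g (last s)) w" "w \<in> Delta (length s) ` YT r cor g (butlast s)" by (rule imageE)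
      from w(2) obtain z' where z': "w = Delta (length s) z'" by (rule imageE)
      have "Delta (length s) z = cinv r cor g s (sroot g (last s)) (Delta (length s) z')"
        using f w(1) z' by simp
      then have eq: "Delta (length s) z = cinv r cor g s (sroot g (s ! (length s - 1))) (Delta (length s) z')"
        unfolding lst .
      have "Delta (length s) z = (\<lambda>_. 0)"
        by (rule inter_zero[OF rd ib hr assms(6) refl assms(9) lastS eq])
      then show "f \<in> {\<lambda>_. 0}" using f by simp
    qed
  qed
  show "YT r cor g s \<subseteq> (dsum r R (length s) :: (nat list \<Rightarrow> 't ST fract) set)"
  proof
    fix f assume "f \<in> (YT r cor g s :: (nat list \<Rightarrow> 't ST fract) set)"
    then have "f \<in> (Yrev r cor g (rev s) :: (nat list \<Rightarrow> 't ST fract) set)" unfolding YT_def .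
    from Yrev_QT[OF rd ib hr _ this] assms(8)
    have "(\<forall>\<sigma>. f \<sigma> \<in> QT r R) \<and> (\<forall>\<sigma>. \<sigma> \<notin> idx (length s) \<longrightarrow> f \<sigma> = 0)" by simp
    then show "f \<in> dsum r R (length s)" unfolding dsum_def by blast
  qed
qed

end
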